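(* Assume the setting in the context (Condition ASM). Fix $c>1$, $\bar c=(c+1)/(c-1)$, and let $\widehat\beta$ be a LASSO solution. If $\lambda\geqslant c\,n\|S\|_\infty$, then $$\|\widehat\beta-\beta_0\|_1\leqslant\frac{(1+2\bar c)\sqrt s}{\kappa_{2\bar c}}\Big[\Big(1+\frac1c\Big)\frac{\lambda\sqrt s}{n\kappa_{\bar c}}+2c_s\Big]+\Big(1+\frac{1}{2\bar c}\Big)\frac{2c}{c-1}\frac{n}{\lambda}c_s^2,$$ where $c_s=0$ in the parametric case $f_i=x_i'\beta_0$.
   Context: Condition ASM: observations $(y_i,z_i)$, $i=1,\dots,n$, $z_i$ fixed, $y_i=f(z_i)+\varepsilon_i$, $\varepsilon_i$ i.i.d. $N(0,\sigma^2)$; $f_i=f(z_i)$, $\mathbb{E}_n[a_i]=n^{-1}\sum_ia_i$; $x_i=P(z_i)\in\mathbb{R}^p$ (including a constant) with $\mathbb{E}_n[x_{ij}^2]=1$. $\beta_0$ is any solution of $\min_\beta\mathbb{E}_n[(f_i-x_i'\beta)^2]+\sigma^2\|\beta\|_0/n$; $s=\|\beta_0\|_0$, $T=\mathrm{support}(\beta_0)$, $c_s=\sqrt{\mathbb{E}_n[(f_i-x_i'\beta_0)^2]}\leqslant K\sigma\sqrt{s/n}$ for an absolute constant $K$. $\|\delta\|_{2,n}=\sqrt{\mathbb{E}_n[(x_i'\delta)^2]}$; $S=2\mathbb{E}_n[x_i\varepsilon_i]$; LASSO: $\widehat\beta\in\arg\min_\beta\mathbb{E}_n[(y_i-x_i'\beta)^2]+\frac\lambda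 n\|\beta\|_1$, $\lambda>0$. $\delta_A$ is $\delta$ with entries outside $A$ set to zero. Restricted eigenvalue: for $C>0$, $\kappa_C=\min\{\sqrt s\|\delta\|_{2,n}/\|\delta_T\|_1:\|\delta_{T^c}\|_1\leqslant C\|\delta_T\|_1,\ \delta_T\neq0\}$. *)

theory Defs
  imports "HOL-Probability.Probability"
begin

definition En :: "nat \<Rightarrow> (nat \<Rightarrow> real) \<Rightarrow> real" where
  "En n a = (\<Sum>i<n. a i) / real n"

(* Vectors in R^p are functions nat => real; only coordinates j < p are relevant.
   x i j is the j-th regressor of observation i. *)
definition xdot :: "nat \<Rightarrow> (nat \<Rightarrow> nat \<Rightarrow> real) \<Rightarrow> nat \<Rightarrow> (nat \<Rightarrow> real) \<Rightarrow> real" where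
  "xdot p x i b = (\<Sum>j<p. x i j * b j)"

definition l1norm :: "nat \<Rightarrow> (nat \<Rightarrow> real) \<Rightarrow> real" where
  "l1norm p b = (\<Sum>j<p. \<bar>b j\<bar>)"

definition l0norm :: "nat \<Rightarrow> (nat \<Rightarrow> real) \<Rightarrow> nat" where
  "l0norm p b = card {j. j < p \<and> b j \<noteq> 0}"

definition supp :: "nat \<Rightarrow> (nat \<Rightarrow> real) \<Rightarrow> nat set" where
  "supp p b = {j. j < p \<and> b j \<noteq> 0}"

definition linfnorm :: "nat \<Rightarrow> (nat \<Rightarrow> real) \<Rightarrow> real" where
  "linfnorm p b = Max ((\<lambda>j. \<bar>b j\<bar>) ` {..<p})"

definition restr :: "nat set \<Rightarrow> (nat \<Rightarrow> real) \<Rightarrow> nat \<Rightarrow> real" where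
  "restr A d = (\<lambda>j. if j \<in> A then d j else 0)"

definition norm2n :: "nat \<Rightarrow> nat \<Rightarrow> (nat \<Rightarrow> nat \<Rightarrow> real) \<Rightarrow> (nat \<Rightarrow> real) \<Rightarrow> real" where
  "norm2n n p x d = sqrt (En n (\<lambda>i. (xdot p x i d)\<^sup>2))"

definition lasso_obj :: "nat \<Rightarrow> nat \<Rightarrow> (nat \<Rightarrow> nat \<Rightarrow> real) \<Rightarrow> (nat \<Rightarrow> real) \<Rightarrow> real \<Rightarrow> (nat \<Rightarrow> real) \<Rightarrow> real" where
  "lasso_obj n p x y lam b = En n (\<lambda>i. (y i - xdot p x i b)\<^sup>2) + lam / real n * l1norm p b"

definition is_lasso :: "nat \<Rightarrow> nat \<Rightarrow> (nat \<Rightarrow> nat \<Rightarrow> real) \<Rightarrow> (nat \<Rightarrow> real) \<Rightarrow> real \<Rightarrow> (nat \<Rightarrow> real) \<Rightarrow> bool" where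
  "is_lasso n p x y lam bh \<longleftrightarrow> (\<forall>b. lasso_obj n p x y lam bh \<le> lasso_obj n p x y lam b)"

definition oracle_obj :: "nat \<Rightarrow> nat \<Rightarrow> (nat \<Rightarrow> nat \<Rightarrow> real) \<Rightarrow> (nat \<Rightarrow> real) \<Rightarrow> real \<Rightarrow> (nat \<Rightarrow> real) \<Rightarrow> real" where
  "oracle_obj n p x f \<sigma> b = En n (\<lambda>i. (f i - xdot p x i b)\<^sup>2) + \<sigma>\<^sup>2 * real (l0norm p b) / real n"

definition kappa :: "nat \<Rightarrow> nat \<Rightarrow> (nat \<Rightarrow> nat \<Rightarrow> real) \<Rightarrow> nat set \<Rightarrow> real \<Rightarrow> real" where
  "kappa n p x T C = Inf {sqrt (real (card T)) * norm2n n p x d / l1norm p (restr T d) | d.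
       l1norm p (restr ({..<p} - T) d) \<le> C * l1norm p (restr T d) \<and> (\<exists>j\<in>T. d j \<noteq> 0)}"

end

theory Submission
  imports Defs
begin

lemma abstract:
  fixes D cs a b lam m c s k1 k2 cbar :: real
  assumes D0: "0 \<le> D" and cs0: "0 \<le> cs" and a0: "0 \<le> a" and b0: "0 \<le> b" and lam: "0 < lam"
    and m: "0 < m" and c: "1 < c" and s0': "0 \<le> s"
  and main: "D\<^sup>2 \<le> lam/m*(1+1/c)*a - lam/m*(1-1/c)*b + 2*cs*D"
  and s0: "s = 0 \<Longrightarrow> a = 0"
  and k1pos: "0 < s \<Longrightarrow> 0 < k1" and k2pos: "0 < s \<Longrightarrow> 0 < k2"
  and k1: "0 < a \<Longrightarrow> b \<le> cbar * a \<Longrightarrow> k1 * a \<le> sqrt s * D"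
  and k2: "0 < a \<Longrightarrow> b \<le> 2*cbar*a \<Longrightarrow> k2 * a \<le> sqrt s * D"
  and cbar: "cbar = (c+1)/(c-1)"
  shows "a + b \<le> (1 + 2 * cbar) * sqrt s / k2 * ((1 + 1 / c) * lam * sqrt s / (m * k1) + 2 * cs)
     + (1 + 1 / (2 * cbar)) * (2 * c / (c - 1)) * (m / lam) * cs\<^sup>2"
proof -
  define A where "A = lam / m"
  have A: "0 < A" using lam m by (simp add: A_def)
  have cb: "1 < cbar" using c by (simp add: cbar field_simps)
  have rel: "1 + 1/c = cbar * (1 - 1/c)" using c by (simp add: cbar field_simps)
  have pc: "0 < 1 - 1/c" using c by (simp add: field_simps)
  define P where "P = (1 + 1 / c) * lam * sqrt s / (m * k1) + 2 * cs"
  define T1 where "T1 = (1 + 2 * cbar) * sqrt s / k2 * P"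
  define T2 where "T2 = (1 + 1 / (2 * cbar)) * (2 * c / (c - 1)) * (m / lam) * cs\<^sup>2"
  have P1: "0 \<le> (1 + 1 / c) * lam * sqrt s / (m * k1)"
  proof (cases "s = 0")
    case False then have "0 < k1" using k1pos s0' by auto
    then show ?thesis using c lam m s0' by (intro divide_nonneg_pos mult_nonneg_nonneg) auto
  qed simp
  have P0: "0 \<le> P" using P1 cs0 by (simp add: P_def)
  have T10: "0 \<le> T1"
  proof (cases "s = 0")
    case False then have "0 < k2" using k2pos s0' by auto
    then show ?thesis unfolding T1_def using cb P0 s0' by (intro mult_nonneg_nonneg divide_nonneg_pos) auto
  qed (simp add: T1_def)
  have T20: "0 \<le> T2" unfolding T2_def using cb c m lam by (intro mult_nonneg_nonneg) auto
  have main': "D\<^sup>2 \<le> A*(1-1/c)*(cbar*a - b) + 2*cs*D"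
  proof -
    have "A*(1-1/c)*(cbar*a - b) = A*(cbar*(1-1/c))*a - A*(1-1/c)*b" by (simp add: algebra_simps)
    also have "\<dots> = lam/m*(1+1/c)*a - lam/m*(1-1/c)*b" unfolding rel A_def ..
    finally show ?thesis using main by simp
  qed
  show ?thesis
  proof (cases "b \<le> 2*cbar*a")
    case True
    have DP: "D \<le> P"
    proof (cases "0 < a \<and> b \<le> cbar * a")
      case True
      then have spos: "0 < s" using s0 s0' by force
      have kk: "0 < k1" using k1pos spos by auto
      have ka: "a \<le> sqrt s * D / k1" using k1 True kk by (simp add: field_simps)
      have "A*(1-1/c)*(cbar*a - b) \<le> A*(1-1/c)*(cbar*a)" using A pc b0 by (simp add: mult_left_mono)
      also have "\<dots> = A*(1+1/c)*a" using rel by simp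
      also have "\<dots> \<le> A*(1+1/c)*(sqrt s * D / k1)" using ka A c by (intro mult_left_mono) auto
      finally have "D\<^sup>2 \<le> A*(1+1/c)*(sqrt s * D / k1) + 2*cs*D" using main' by linarith
      then have "D * D \<le> D * (A*(1+1/c)* sqrt s / k1 + 2*cs)" by (simp add: power2_eq_square algebra_simps)
      then have "D \<le> A*(1+1/c)* sqrt s / k1 + 2*cs"
      proof (cases "D = 0")
        case True
        have "0 \<le> A*(1+1/c)* sqrt s / k1" using A kk c s0' by (intro divide_nonneg_pos mult_nonneg_nonneg) auto
        then show ?thesis using True cs0 by simp
      next
        case False then show ?thesis using D0 \<open>D * D \<le> _\<close> by simp
      qed
      then show ?thesis unfolding P_def A_def by (simp add: field_simps)
    next
      case False
      then have "cbar*a - b \<le> 0" using a0 b0 by auto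
      then have "A*(1-1/c)*(cbar*a - b) \<le> 0" using A pc by (simp add: mult_nonneg_nonpos)
      then have "D * D \<le> D * (2*cs)" using main' by (simp add: power2_eq_square mult.commute)
      then have "D \<le> 2*cs" using D0 cs0 by (cases "D = 0") auto
      then show ?thesis using P1 unfolding P_def by linarith
    qed
    show ?thesis
    proof (cases "0 < a")
      case True
      then have spos: "0 < s" using s0 s0' by force
      have kk: "0 < k2" using k2pos spos by auto
      have ka: "a \<le> sqrt s * D / k2" using k2[OF True \<open>b \<le> 2*cbar*a\<close>] kk by (simp add: field_simps)
      have "a + b \<le> (1 + 2*cbar) * a" using \<open>b \<le> 2*cbar*a\<close> by (simp add: algebra_simps)
      also have "\<dots> \<le> (1 + 2*cbar) * (sqrt s * D / k2)" using ka cb by (intro mult_left_mono) auto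
      also have "\<dots> \<le> (1 + 2*cbar) * (sqrt s * P / k2)"
        using DP kk cb s0' by (intro mult_left_mono divide_right_mono) auto
      also have "\<dots> = T1" by (simp add: T1_def)
      finally show ?thesis using T20 unfolding T1_def T2_def P_def by linarith
    next
      case False
      then have "a = 0" using a0 by auto
      then have "b = 0" using True b0 by auto
      then show ?thesis using T10 T20 \<open>a = 0\<close> unfolding T1_def T2_def P_def by linarith
    qed
  next
    case False
    then have ab: "a < b / (2*cbar)" using cb by (simp add: field_simps)
    have "A*(1-1/c)*(cbar*a) \<le> A*(1-1/c)*(cbar*(b/(2*cbar)))"
      using ab A pc cb by (intro mult_left_mono) auto
    also have "\<dots> = A*(1-1/c)*b/2" using cb by simp
    finally have e1: "A*(1-1/c)*(cbar*a) \<le> A*(1-1/c)*b/2" .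
    have e: "A*(1-1/c)*(cbar*a - b) = A*(1-1/c)*(cbar*a) - A*(1-1/c)*b" by (simp add: algebra_simps)
    have "D\<^sup>2 \<le> A*(1-1/c)*b/2 - A*(1-1/c)*b + 2*cs*D" using main' e e1 by linarith
    then have "A*(1-1/c)*b/2 \<le> 2*cs*D - D\<^sup>2" by linarith
    also have "\<dots> \<le> cs\<^sup>2" using sum_power2_ge_zero[of "cs - D" 0] by (simp add: power2_eq_square algebra_simps)
    finally have hb: "A*(1-1/c)*b/2 \<le> cs\<^sup>2" .
    have bb: "b \<le> (2 * c / (c - 1)) * (m / lam) * cs\<^sup>2"
    proof -
      have "lam*(c-1)/(2*c*m) * b = A*(1-1/c)*b/2" using c m unfolding A_def by (simp add: field_simps)
      then have "lam*(c-1)/(2*c*m) * b \<le> cs\<^sup>2" using hb by linarith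
      then show ?thesis using c m lam by (simp add: field_simps)
    qed
    have "a + b \<le> (1 + 1/(2*cbar)) * b" using ab by (simp add: algebra_simps)
    also have "\<dots> \<le> (1 + 1/(2*cbar)) * ((2 * c / (c - 1)) * (m / lam) * cs\<^sup>2)"
      using bb cb by (intro mult_left_mono) auto
    also have "\<dots> = T2" unfolding T2_def by simp
    finally have "a + b \<le> T2" .
    then have "a + b \<le> T1 + T2" using T10 by linarith
    then show ?thesis unfolding T1_def T2_def P_def .
  qed
qed


lemma En_nonneg_sq: "0 \<le> En n (\<lambda>i. (a i)\<^sup>2)"
  unfolding En_def by (intro divide_nonneg_nonneg sum_nonneg) auto

lemma En_CS:
  assumes "0 < n"
  shows "\<bar>En n (\<lambda>i. a i * b i)\<bar> \<le> sqrt (En n (\<lambda>i. (a i)\<^sup>2)) * sqrt (En n (\<lambda>i. (b i)\<^sup>2))"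
proof -
  have cs: "(\<Sum>i<n. a i * b i)\<^sup>2 \<le> (\<Sum>i<n. (a i)\<^sup>2) * (\<Sum>i<n. (b i)\<^sup>2)"
    by (rule Cauchy_Schwarz_ineq_sum)
  have "(En n (\<lambda>i. a i * b i))\<^sup>2 \<le> En n (\<lambda>i. (a i)\<^sup>2) * En n (\<lambda>i. (b i)\<^sup>2)"
    using cs assms by (simp add: En_def power_divide divide_right_mono power2_eq_square)
  then have "sqrt ((En n (\<lambda>i. a i * b i))\<^sup>2) \<le> sqrt (En n (\<lambda>i. (a i)\<^sup>2) * En n (\<lambda>i. (b i)\<^sup>2))"
    by (rule real_sqrt_le_mono)
  then show ?thesis by (simp add: real_sqrt_mult)
qed

lemma En_swap:
  "En n (\<lambda>i. e i * xdot p x i d) = (\<Sum>j<p. d j * En n (\<lambda>i. x i j * e i))"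
proof -
  have "(\<Sum>i<n. e i * (\<Sum>j<p. x i j * d j)) = (\<Sum>i<n. \<Sum>j<p. d j * (x i j * e i))"
    by (simp add: sum_distrib_left mult_ac)
  also have "\<dots> = (\<Sum>j<p. \<Sum>i<n. d j * (x i j * e i))" by (rule sum.swap)
  also have "\<dots> = (\<Sum>j<p. d j * (\<Sum>i<n. x i j * e i))" by (simp add: sum_distrib_left)
  finally have calc: "(\<Sum>i<n. e i * (\<Sum>j<p. x i j * d j)) = (\<Sum>j<p. d j * (\<Sum>i<n. x i j * e i))" .
  have "(\<Sum>j<p. d j * ((\<Sum>i<n. x i j * e i) / real n)) = (\<Sum>j<p. d j * (\<Sum>i<n. x i j * e i) / real n)"
    by simp
  also have "\<dots> = (\<Sum>j<p. d j * (\<Sum>i<n. x i j * e i)) / real n"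
    by (rule sum_divide_distrib[symmetric])
  finally have q: "(\<Sum>j<p. d j * ((\<Sum>i<n. x i j * e i) / real n)) = (\<Sum>j<p. d j * (\<Sum>i<n. x i j * e i)) / real n" .
  show ?thesis by (simp only: En_def xdot_def calc q)
qed

lemma l1_split:
  assumes "T \<subseteq> {..<p}"
  shows "l1norm p d = l1norm p (restr T d) + l1norm p (restr ({..<p} - T) d)"
  unfolding l1norm_def restr_def by (simp add: sum.distrib[symmetric]) (rule sum.cong, auto)

theorem lemma7:
  fixes M :: "'a measure"
    and n p :: nat
    and x :: "nat \<Rightarrow> nat \<Rightarrow> real"
    and f :: "nat \<Rightarrow> real"
    and \<epsilon> :: "nat \<Rightarrow> 'a \<Rightarrow> real"
    and \<sigma> K c lam :: real
    and \<beta>0 \<beta>h :: "nat \<Rightarrow> real"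
    and \<omega> :: 'a
  assumes n_pos: "0 < n" and p_pos: "0 < p"
    and prob: "prob_space M"
    and sigma_pos: "0 < \<sigma>"
    and eps_rv: "\<forall>i<n. distributed M lborel (\<epsilon> i) (normal_density 0 \<sigma>)"
    and eps_indep: "prob_space.indep_vars M (\<lambda>_. borel) \<epsilon> {..<n}"
    and const: "\<exists>j<p. \<forall>i<n. x i j = 1"
    and normalized: "\<forall>j<p. En n (\<lambda>i. (x i j)\<^sup>2) = 1"
    and beta0_min: "\<forall>b. oracle_obj n p x f \<sigma> \<beta>0 \<le> oracle_obj n p x f \<sigma> b"
    and cs_bound: "sqrt (En n (\<lambda>i. (f i - xdot p x i \<beta>0)\<^sup>2))
                     \<le> K * \<sigma> * sqrt (real (l0norm p \<beta>0) / real n)"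
    and c_gt1: "1 < c"
    and lam_pos: "0 < lam"
    and omega: "\<omega> \<in> space M"
    and lasso: "is_lasso n p x (\<lambda>i. f i + \<epsilon> i \<omega>) lam \<beta>h"
    and kappa1_pos: "0 < l0norm p \<beta>0 \<Longrightarrow>
          0 < kappa n p x (supp p \<beta>0) ((c + 1) / (c - 1))"
    and kappa2_pos: "0 < l0norm p \<beta>0 \<Longrightarrow>
          0 < kappa n p x (supp p \<beta>0) (2 * ((c + 1) / (c - 1)))"
    and lam_event: "c * real n * linfnorm p (\<lambda>j. 2 * En n (\<lambda>i. x i j * \<epsilon> i \<omega>)) \<le> lam"
  shows "let cbar = (c + 1) / (c - 1);
             s = real (l0norm p \<beta>0);
             T = supp p \<beta>0;
             cs = sqrt (En n (\<lambda>i. (f i - xdot p x i \<beta>0)\<^sup>2))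
         in l1norm p (\<lambda>j. \<beta>h j - \<beta>0 j)
            \<le> (1 + 2 * cbar) * sqrt s / kappa n p x T (2 * cbar)
                 * ((1 + 1 / c) * lam * sqrt s / (real n * kappa n p x T cbar) + 2 * cs)
               + (1 + 1 / (2 * cbar)) * (2 * c / (c - 1)) * (real n / lam) * cs\<^sup>2"
  proof -
  define T where "T = supp p \<beta>0"
  define \<delta> where "\<delta> = (\<lambda>j. \<beta>h j - \<beta>0 j)"
  define e where "e = (\<lambda>i. \<epsilon> i \<omega>)"
  define r where "r = (\<lambda>i. f i - xdot p x i \<beta>0)"
  define u where "u = (\<lambda>i. xdot p x i \<delta>)"
  define D where "D = norm2n n p x \<delta>"
  define cs where "cs = sqrt (En n (\<lambda>i. (f i - xdot p x i \<beta>0)\<^sup>2))"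
  define a where "a = l1norm p (restr T \<delta>)"
  define b where "b = l1norm p (restr ({..<p} - T) \<delta>)"
  define s where "s = real (l0norm p \<beta>0)"
  define cbar where "cbar = (c + 1) / (c - 1)"
  define Sinf where "Sinf = linfnorm p (\<lambda>j. 2 * En n (\<lambda>i. x i j * \<epsilon> i \<omega>))"
  have Tsub: "T \<subseteq> {..<p}" unfolding T_def supp_def by auto
  have finT: "finite T" using Tsub finite_subset by blast
  have sT: "s = real (card T)" unfolding s_def T_def l0norm_def supp_def by simp
  have L1: "l1norm p \<delta> = a + b" unfolding a_def b_def by (rule l1_split[OF Tsub])
  have a0: "0 \<le> a" unfolding a_def l1norm_def by (simp add: sum_nonneg)
  have b0: "0 \<le> b" unfolding b_def l1norm_def by (simp add: sum_nonneg)
  have n0: "0 < real n" using n_pos by simp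
  have Dsq: "D\<^sup>2 = En n (\<lambda>i. (u i)\<^sup>2)" unfolding D_def norm2n_def u_def by (rule real_sqrt_pow2[OF En_nonneg_sq])
  have D0: "0 \<le> D" unfolding D_def norm2n_def by (rule real_sqrt_ge_zero[OF En_nonneg_sq])
  have cs0: "0 \<le> cs" unfolding cs_def by (rule real_sqrt_ge_zero[OF En_nonneg_sq])
  have cssq: "cs\<^sup>2 = En n (\<lambda>i. (r i)\<^sup>2)" unfolding cs_def r_def by (rule real_sqrt_pow2[OF En_nonneg_sq])
  have xh: "\<And>i. xdot p x i \<beta>h = xdot p x i \<beta>0 + u i"
    unfolding u_def xdot_def \<delta>_def by (simp add: sum.distrib[symmetric] algebra_simps)
  have lasso_ineq: "lasso_obj n p x (\<lambda>i. f i + \<epsilon> i \<omega>) lam \<beta>h \<le> lasso_obj n p x (\<lambda>i. f i + \<epsilon> i \<omega>) lam \<beta>0"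
    using lasso unfolding is_lasso_def by blast
  have pw: "\<And>i. (f i + \<epsilon> i \<omega> - xdot p x i \<beta>h)\<^sup>2 = (e i + r i)\<^sup>2 + (u i)\<^sup>2 - 2 * (e i * u i) - 2 * (r i * u i)"
    unfolding e_def r_def xh by (simp add: power2_eq_square algebra_simps)
  have pw0: "\<And>i. (f i + \<epsilon> i \<omega> - xdot p x i \<beta>0) = e i + r i" unfolding e_def r_def by simp
  have Eh: "En n (\<lambda>i. (f i + \<epsilon> i \<omega> - xdot p x i \<beta>h)\<^sup>2)
      = En n (\<lambda>i. (e i + r i)\<^sup>2) + En n (\<lambda>i. (u i)\<^sup>2) - 2 * En n (\<lambda>i. e i * u i) - 2 * En n (\<lambda>i. r i * u i)"
    unfolding pw En_def by (simp add: sum.distrib sum_subtractf sum_distrib_left[symmetric] diff_divide_distrib add_divide_distrib)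
  have E0: "En n (\<lambda>i. (f i + \<epsilon> i \<omega> - xdot p x i \<beta>0)\<^sup>2) = En n (\<lambda>i. (e i + r i)\<^sup>2)"
    unfolding pw0 ..
  have step1: "D\<^sup>2 \<le> 2 * En n (\<lambda>i. e i * u i) + 2 * En n (\<lambda>i. r i * u i) + lam / real n * (l1norm p \<beta>0 - l1norm p \<beta>h)"
    using lasso_ineq unfolding lasso_obj_def Eh E0 Dsq by (simp add: algebra_simps)
  have Sj: "\<And>j. j < p \<Longrightarrow> \<bar>2 * En n (\<lambda>i. x i j * e i)\<bar> \<le> Sinf"
    unfolding Sinf_def linfnorm_def e_def by (rule Max_ge) auto
  have "2 * En n (\<lambda>i. e i * u i) = (\<Sum>j<p. \<delta> j * (2 * En n (\<lambda>i. x i j * e i)))"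
    unfolding u_def En_swap by (simp add: sum_distrib_left mult_ac)
  also have "\<dots> \<le> (\<Sum>j<p. \<bar>\<delta> j\<bar> * Sinf)"
  proof (rule sum_mono)
    fix j assume "j \<in> {..<p}"
    then have "\<bar>2 * En n (\<lambda>i. x i j * e i)\<bar> \<le> Sinf" using Sj by auto
    then have "\<bar>\<delta> j\<bar> * \<bar>2 * En n (\<lambda>i. x i j * e i)\<bar> \<le> \<bar>\<delta> j\<bar> * Sinf" by (simp add: mult_left_mono)
    then show "\<delta> j * (2 * En n (\<lambda>i. x i j * e i)) \<le> \<bar>\<delta> j\<bar> * Sinf"
      by (metis abs_ge_self abs_mult order_trans)
  qed
  also have "\<dots> = (a + b) * Sinf" unfolding L1[symmetric] l1norm_def by (simp add: sum_distrib_right)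
  also have "\<dots> \<le> (a + b) * (lam / (c * real n))"
  proof (rule mult_left_mono)
    show "Sinf \<le> lam / (c * real n)" using lam_event c_gt1 n0 unfolding Sinf_def by (simp add: field_simps)
  qed (use a0 b0 in auto)
  finally have noise: "2 * En n (\<lambda>i. e i * u i) \<le> (a + b) * (lam / (c * real n))" .
  have approx: "2 * En n (\<lambda>i. r i * u i) \<le> 2 * cs * D"
  proof -
    have "En n (\<lambda>i. r i * u i) \<le> cs * D"
      using En_CS[OF n_pos, of r u] unfolding cs_def D_def norm2n_def r_def u_def by simp
    then show ?thesis by simp
  qed
  have pen: "l1norm p \<beta>0 - l1norm p \<beta>h \<le> a - b"
  proof -
    have "l1norm p \<beta>0 - l1norm p \<beta>h = (\<Sum>j<p. \<bar>\<beta>0 j\<bar> - \<bar>\<beta>h j\<bar>)"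
      unfolding l1norm_def by (simp add: sum_subtractf)
    also have "\<dots> \<le> (\<Sum>j<p. \<bar>restr T \<delta> j\<bar> - \<bar>restr ({..<p} - T) \<delta> j\<bar>)"
    proof (rule sum_mono)
      fix j assume j: "j \<in> {..<p}"
      show "\<bar>\<beta>0 j\<bar> - \<bar>\<beta>h j\<bar> \<le> \<bar>restr T \<delta> j\<bar> - \<bar>restr ({..<p} - T) \<delta> j\<bar>"
      proof (cases "j \<in> T")
        case True then show ?thesis unfolding restr_def \<delta>_def by auto
      next
        case False
        then have "\<beta>0 j = 0" using j unfolding T_def supp_def by auto
        then show ?thesis using False j unfolding restr_def \<delta>_def by auto
      qed
    qed
    also have "\<dots> = a - b" unfolding a_def b_def l1norm_def by (simp add: sum_subtractf)
    finally show ?thesis .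
  qed
  have step2: "lam / real n * (l1norm p \<beta>0 - l1norm p \<beta>h) \<le> lam / real n * (a - b)"
    using pen lam_pos n0 by (intro mult_left_mono) auto
  have eqm: "(a + b) * (lam / (c * real n)) + lam / real n * (a - b)
       = lam/real n*(1+1/c)*a - lam/real n*(1-1/c)*b"
    using c_gt1 n0 by (simp add: field_simps)
  have main: "D\<^sup>2 \<le> lam/real n*(1+1/c)*a - lam/real n*(1-1/c)*b + 2*cs*D"
    using step1 noise approx step2 eqm by linarith
  have s0: "s = 0 \<Longrightarrow> a = 0"
  proof -
    assume "s = 0"
    then have "T = {}" using sT finT by simp
    then show "a = 0" unfolding a_def l1norm_def restr_def by simp
  qed
  have kap: "kappa n p x T C * a \<le> sqrt s * D" if ap: "0 < a" and bc: "b \<le> C * a" for C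
  proof -
    let ?X = "{sqrt (real (card T)) * norm2n n p x d / l1norm p (restr T d) | d.
       l1norm p (restr ({..<p} - T) d) \<le> C * l1norm p (restr T d) \<and> (\<exists>j\<in>T. d j \<noteq> 0)}"
    have ex: "\<exists>j\<in>T. \<delta> j \<noteq> 0"
    proof (rule ccontr)
      assume "\<not> ?thesis"
      then have "a = 0" unfolding a_def l1norm_def restr_def by (auto intro!: sum.neutral)
      then show False using ap by simp
    qed
    have mem: "sqrt s * D / a \<in> ?X"
      using bc ex unfolding a_def b_def D_def sT by blast
    have bdd: "bdd_below ?X"
    proof (rule bdd_belowI)
      fix y assume "y \<in> ?X"
      then obtain d where "y = sqrt (real (card T)) * norm2n n p x d / l1norm p (restr T d)" by blast
      moreover have "0 \<le> l1norm p (restr T d)" unfolding l1norm_def by (simp add: sum_nonneg)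
      moreover have "0 \<le> norm2n n p x d" unfolding norm2n_def by (rule real_sqrt_ge_zero[OF En_nonneg_sq])
      ultimately show "0 \<le> y" by simp
    qed
    have "kappa n p x T C \<le> sqrt s * D / a"
      unfolding kappa_def by (rule cInf_lower[OF mem bdd])
    then show ?thesis using ap by (simp add: pos_le_divide_eq)
  qed
  have k1pos: "0 < s \<Longrightarrow> 0 < kappa n p x T cbar" using kappa1_pos unfolding s_def T_def cbar_def by simp
  have k2pos: "0 < s \<Longrightarrow> 0 < kappa n p x T (2 * cbar)" using kappa2_pos unfolding s_def T_def cbar_def by simp
  have res: "a + b \<le> (1 + 2 * cbar) * sqrt s / kappa n p x T (2 * cbar) * ((1 + 1 / c) * lam * sqrt s / (real n * kappa n p x T cbar) + 2 * cs)
     + (1 + 1 / (2 * cbar)) * (2 * c / (c - 1)) * (real n / lam) * cs\<^sup>2"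
    by (rule abstract[OF D0 cs0 a0 b0 lam_pos n0 c_gt1 _ main s0 k1pos k2pos kap kap cbar_def])
       (auto simp: s_def mult.assoc)
  show ?thesis using res L1 unfolding Let_def T_def[symmetric] cbar_def[symmetric] s_def[symmetric] cs_def[symmetric] \<delta>_def[symmetric]
    by simp
qed


end
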